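(* Let $R$ be a representation of $\mathbf{Q}$ with dimension vector $(1,4,1)$ which is either globally surjective but not locally injective, or globally injective but not locally surjective. Then for no $(\alpha,\gamma)\in\mathbb{R}^2$ is $R$ $\theta$-stable, where $\theta=(\alpha,-(\alpha+\gamma)/4,\gamma)$.
   Context: The quiver $\mathbf{Q}$ has vertices $-1,0,1$, arrows $\eta_0,\dots,\eta_3:-1\to0$, $\phi_0,\dots,\phi_3:0\to1$ and relations $\phi_i\eta_j+\phi_j\eta_i=0$; a representation consists of vector spaces $V_{-1},V_0,V_1$ and linear maps $f_i:V_{-1}\to V_0$, $g_i:V_0\to V_1$ with $g_if_j+g_jf_i=0$. $R$ is globally injective (resp. surjective) if $\sum\lambda_if_i$ is injective (resp. $\sum\lambda_ig_i$ surjective) for all $\lambda\in\mathbb{C}^4\setminus\{0\}$; locally injective (resp. surjective) if this holds for all $[\lambda]\in\mathbb{P}^3$ outside a closed subset of codimension at least 2. $R$ is $\theta$-stable if $\theta\cdot\dim R=0$ and $\theta\cdot\dim S<0$ for every nonzero proper subrepresentation $S$. *)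

theory Defs
  imports "HOL-Analysis.Analysis"
begin

text \<open>A representation of Q with dimension vector (1,4,1), in coordinates:
  V_{-1} = complex^1, V_0 = complex^4, V_1 = complex^1.
  The arrow eta_i acts by the 4x1 matrix F i, the arrow phi_i by the 1x4 matrix G i.\<close>

definition is_rep :: "(4 \<Rightarrow> complex^1^4) \<Rightarrow> (4 \<Rightarrow> complex^4^1) \<Rightarrow> bool" where
  "is_rep F G \<longleftrightarrow> (\<forall>i j. G i ** F j + G j ** F i = 0)"

definition sum_f :: "(4 \<Rightarrow> complex^1^4) \<Rightarrow> complex^4 \<Rightarrow> complex^1 \<Rightarrow> complex^4" where
  "sum_f F l = (\<lambda>x. \<Sum>i\<in>UNIV. l $ i *s (F i *v x))"

definition sum_g :: "(4 \<Rightarrow> complex^4^1) \<Rightarrow> complex^4 \<Rightarrow> complex^4 \<Rightarrow> complex^1" where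
  "sum_g G l = (\<lambda>v. \<Sum>i\<in>UNIV. l $ i *s (G i *v v))"

definition glob_inj :: "(4 \<Rightarrow> complex^1^4) \<Rightarrow> bool" where
  "glob_inj F \<longleftrightarrow> (\<forall>l. l \<noteq> 0 \<longrightarrow> inj (sum_f F l))"

definition glob_surj :: "(4 \<Rightarrow> complex^4^1) \<Rightarrow> bool" where
  "glob_surj G \<longleftrightarrow> (\<forall>l. l \<noteq> 0 \<longrightarrow> surj (sum_g G l))"

text \<open>Projective 3-space P^3 is modelled by nonzero vectors of complex^4 (points of P^3 =
  lines); subsets of P^3 are modelled by scaling-invariant sets of nonzero vectors.\<close>

inductive_set polyfun :: "(complex^4 \<Rightarrow> complex) set" where
  const: "(\<lambda>x. c) \<in> polyfun"
| coord: "(\<lambda>x. x $ i) \<in> polyfun"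
| add: "p \<in> polyfun \<Longrightarrow> q \<in> polyfun \<Longrightarrow> (\<lambda>x. p x + q x) \<in> polyfun"
| mult: "p \<in> polyfun \<Longrightarrow> q \<in> polyfun \<Longrightarrow> (\<lambda>x. p x * q x) \<in> polyfun"

definition homog_poly :: "(complex^4 \<Rightarrow> complex) \<Rightarrow> bool" where
  "homog_poly p \<longleftrightarrow> p \<in> polyfun \<and> (\<exists>d::nat. \<forall>t x. p (t *s x) = t ^ d * p x)"

definition proj_closed :: "(complex^4) set \<Rightarrow> bool" where
  "proj_closed Z \<longleftrightarrow> (\<exists>P. (\<forall>p\<in>P. homog_poly p) \<and> Z = {x. x \<noteq> 0 \<and> (\<forall>p\<in>P. p x = 0)})"

definition proj_irred :: "(complex^4) set \<Rightarrow> bool" where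
  "proj_irred Z \<longleftrightarrow> proj_closed Z \<and> Z \<noteq> {} \<and>
     (\<forall>A B. proj_closed A \<and> proj_closed B \<and> Z = A \<union> B \<longrightarrow> Z = A \<or> Z = B)"

definition proj_dim_ge :: "(complex^4) set \<Rightarrow> nat \<Rightarrow> bool" where
  "proj_dim_ge Z n \<longleftrightarrow> (\<exists>C :: nat \<Rightarrow> (complex^4) set.
      (\<forall>k\<le>n. proj_irred (C k) \<and> C k \<subseteq> Z) \<and> (\<forall>k<n. C k \<subset> C (Suc k)))"

text \<open>Codimension in P^3 (of dimension 3): codim Z \<ge> c iff dim Z \<le> 3 - c
  (the empty set has infinite codimension).\<close>
definition proj_codim_ge :: "(complex^4) set \<Rightarrow> nat \<Rightarrow> bool" where
  "proj_codim_ge Z c \<longleftrightarrow> (\<forall>n. proj_dim_ge Z n \<longrightarrow> n + c \<le> 3)"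

definition loc_inj :: "(4 \<Rightarrow> complex^1^4) \<Rightarrow> bool" where
  "loc_inj F \<longleftrightarrow> (\<exists>Z. proj_closed Z \<and> proj_codim_ge Z 2 \<and>
      (\<forall>l. l \<noteq> 0 \<and> l \<notin> Z \<longrightarrow> inj (sum_f F l)))"

definition loc_surj :: "(4 \<Rightarrow> complex^4^1) \<Rightarrow> bool" where
  "loc_surj G \<longleftrightarrow> (\<exists>Z. proj_closed Z \<and> proj_codim_ge Z 2 \<and>
      (\<forall>l. l \<noteq> 0 \<and> l \<notin> Z \<longrightarrow> surj (sum_g G l)))"

text \<open>Subrepresentations (S1, S0, S2) of (V_{-1}, V_0, V_1).\<close>
definition is_subrep :: "(4 \<Rightarrow> complex^1^4) \<Rightarrow> (4 \<Rightarrow> complex^4^1) \<Rightarrow>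
    (complex^1) set \<Rightarrow> (complex^4) set \<Rightarrow> (complex^1) set \<Rightarrow> bool" where
  "is_subrep F G S1 S0 S2 \<longleftrightarrow> vec.subspace S1 \<and> vec.subspace S0 \<and> vec.subspace S2 \<and>
     (\<forall>i. \<forall>x\<in>S1. F i *v x \<in> S0) \<and> (\<forall>i. \<forall>v\<in>S0. G i *v v \<in> S2)"

definition theta_pair :: "real \<times> real \<times> real \<Rightarrow> nat \<times> nat \<times> nat \<Rightarrow> real" where
  "theta_pair \<theta> d = fst \<theta> * real (fst d) + fst (snd \<theta>) * real (fst (snd d))
                    + snd (snd \<theta>) * real (snd (snd d))"

definition theta_stable :: "(4 \<Rightarrow> complex^1^4) \<Rightarrow> (4 \<Rightarrow> complex^4^1) \<Rightarrow> real \<times> real \<times> real \<Rightarrow> bool" where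
  "theta_stable F G \<theta> \<longleftrightarrow> theta_pair \<theta> (1, 4, 1) = 0 \<and>
     (\<forall>S1 S0 S2. is_subrep F G S1 S0 S2 \<and>
        (S1 \<noteq> {0} \<or> S0 \<noteq> {0} \<or> S2 \<noteq> {0}) \<and> (S1 \<noteq> UNIV \<or> S0 \<noteq> UNIV \<or> S2 \<noteq> UNIV)
        \<longrightarrow> theta_pair \<theta> (vec.dim S1, vec.dim S0, vec.dim S2) < 0)"

end

theory Submission
  imports Defs "HOL-Computational_Algebra.Polynomial"
begin

lemma polyfun_sum: "finite S \<Longrightarrow> (\<And>k. k \<in> S \<Longrightarrow> p k \<in> polyfun) \<Longrightarrow> (\<lambda>x. \<Sum>k\<in>S. p k x) \<in> polyfun"
proof (induction S rule: finite_induct)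
  case empty then show ?case using polyfun.const[of 0] by simp
next
  case (insert a S) then show ?case using polyfun.add[of "p a" "\<lambda>x. \<Sum>k\<in>S. p k x"] by simp
qed

lemma polyfun_lin: "(\<lambda>x. \<Sum>k\<in>UNIV. c k * x $ k) \<in> polyfun"
  by (rule polyfun_sum) (auto intro: polyfun.mult polyfun.const polyfun.coord)

lemma homog_lin: "homog_poly (\<lambda>x. \<Sum>k\<in>UNIV. c k * x $ k)"
  unfolding homog_poly_def
  by (auto intro!: polyfun_lin exI[of _ 1] simp: sum_distrib_left mult_ac)

lemma homog_mult: "homog_poly p \<Longrightarrow> homog_poly q \<Longrightarrow> homog_poly (\<lambda>x. p x * q x)"
  unfolding homog_poly_def
  apply (auto intro!: polyfun.mult)
  subgoal for d e by (rule exI[of _ "d+e"]) (simp add: power_add mult_ac)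
  done

lemma A1: "proj_closed Y \<Longrightarrow> \<exists>P. (\<forall>p\<in>P. homog_poly p) \<and> Y = {x. x \<noteq> 0 \<and> (\<forall>p\<in>P. p x = 0)}"
  unfolding proj_closed_def by blast
lemma A2: "(\<forall>t x. p (t *s x) = t ^ d * p x) \<Longrightarrow> p (c *s y) = c ^ d * p y" by blast
lemma A3: "(c::complex) \<noteq> 0 \<Longrightarrow> y \<noteq> 0 \<Longrightarrow> c *s y \<noteq> (0::complex^4)"
  by (simp add: vec_eq_iff)
lemma homog_scale0: assumes "homog_poly p" "p y = 0" shows "p (c *s y) = 0"
proof -
  obtain d where "\<forall>t x. p (t *s x) = t ^ d * p x" using assms(1) unfolding homog_poly_def by blast
  then have "p (c *s y) = c ^ d * p y" by (rule A2)
  then show ?thesis using assms(2) by simp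
qed
lemma closed_scale: "proj_closed Y \<Longrightarrow> y \<in> Y \<Longrightarrow> c \<noteq> 0 \<Longrightarrow> c *s y \<in> Y"
proof -
  assume Y: "proj_closed Y" and yY: "y \<in> Y" and c: "c \<noteq> 0"
  obtain P where P: "\<forall>p\<in>P. homog_poly p" "Y = {x. x \<noteq> 0 \<and> (\<forall>p\<in>P. p x = 0)}"
    using A1[OF Y] by blast
  have y0: "y \<noteq> 0" and yP: "\<And>p. p \<in> P \<Longrightarrow> p y = 0" using yY unfolding P(2) by blast+
  have "\<forall>p\<in>P. p (c *s y) = 0" using homog_scale0 P(1) yP by blast
  moreover have "c *s y \<noteq> 0" using A3 c y0 by blast
  ultimately show ?thesis unfolding P(2) by blast
qed

lemma closed_Un: "proj_closed A \<Longrightarrow> proj_closed B \<Longrightarrow> proj_closed (A \<union> B)"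
proof -
  assume hA: "proj_closed A" and hB: "proj_closed B"
  obtain P where P: "\<forall>p\<in>P. homog_poly p" "A = {x. x \<noteq> 0 \<and> (\<forall>p\<in>P. p x = 0)}"
    using A1[OF hA] by blast
  obtain Q where Q: "\<forall>p\<in>Q. homog_poly p" "B = {x. x \<noteq> 0 \<and> (\<forall>p\<in>Q. p x = 0)}"
    using A1[OF hB] by blast
  let ?R = "(\<lambda>(p,q). (\<lambda>x. p x * q x)) ` (P \<times> Q)"
  have "\<forall>r\<in>?R. homog_poly r" using P(1) Q(1) homog_mult by fast
  moreover have "A \<union> B = {x. x \<noteq> 0 \<and> (\<forall>r\<in>?R. r x = 0)}"
  proof (intro equalityI subsetI)
    fix x assume "x \<in> A \<union> B" then show "x \<in> {x. x \<noteq> 0 \<and> (\<forall>r\<in>?R. r x = 0)}"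
      unfolding P(2) Q(2) by fastforce
  next
    fix x assume "x \<in> {x. x \<noteq> 0 \<and> (\<forall>r\<in>?R. r x = 0)}"
    then have x: "x \<noteq> 0" "\<And>p q. p \<in> P \<Longrightarrow> q \<in> Q \<Longrightarrow> p x * q x = 0" by fastforce+
    show "x \<in> A \<union> B"
    proof (rule ccontr)
      assume "x \<notin> A \<union> B"
      then obtain q p where q: "q \<in> Q" "q x \<noteq> 0" "p \<in> P" "p x \<noteq> 0" using x(1) unfolding P(2) Q(2) by blast
      then show False using x(2)[of p q] by simp
    qed
  qed
  ultimately have "(\<forall>p\<in>?R. homog_poly p) \<and> A \<union> B = {x. x \<noteq> 0 \<and> (\<forall>r\<in>?R. r x = 0)}"
    by (rule conjI)
  then show ?thesis unfolding proj_closed_def by (rule exI)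
qed

lemma closed_Int: "proj_closed A \<Longrightarrow> proj_closed B \<Longrightarrow> proj_closed (A \<inter> B)"
proof -
  assume hA: "proj_closed A" and hB: "proj_closed B"
  obtain P where P: "\<forall>p\<in>P. homog_poly p" "A = {x. x \<noteq> 0 \<and> (\<forall>p\<in>P. p x = 0)}"
    using A1[OF hA] by blast
  obtain Q where Q: "\<forall>p\<in>Q. homog_poly p" "B = {x. x \<noteq> 0 \<and> (\<forall>p\<in>Q. p x = 0)}"
    using A1[OF hB] by blast
  have "\<forall>r\<in>P \<union> Q. homog_poly r" using P Q by blast
  moreover have "A \<inter> B = {x. x \<noteq> 0 \<and> (\<forall>r\<in>P \<union> Q. r x = 0)}"
    unfolding P(2) Q(2) by blast
  ultimately have "(\<forall>p\<in>P \<union> Q. homog_poly p) \<and> A \<inter> B = {x. x \<noteq> 0 \<and> (\<forall>r\<in>P \<union> Q. r x = 0)}"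
    by (rule conjI)
  then show ?thesis unfolding proj_closed_def by (rule exI)
qed

lemma closed_empty: "proj_closed {}"
  unfolding proj_closed_def homog_poly_def
proof (rule exI[of _ "{\<lambda>x. 1}"], intro conjI)
  show "\<forall>p\<in>{\<lambda>x. 1}. p \<in> polyfun \<and> (\<exists>d. \<forall>t x. p (t *s x) = t ^ d * p x)"
    using polyfun.const[of 1] by (simp add: exI[of _ 0])
qed simp

definition Lx :: "complex^4 \<Rightarrow> (complex^4) set" where
  "Lx x = {y. y \<noteq> 0 \<and> (\<exists>c. y = c *s x)}"

definition minor :: "complex^4 \<Rightarrow> 4 \<Rightarrow> 4 \<Rightarrow> complex^4 \<Rightarrow> complex" where
  "minor x i j l = x $ i * l $ j - x $ j * l $ i"

lemma homog_minor: "homog_poly (minor x i j)"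
proof -
  have 1: "(\<lambda>l. x$i * l$j) \<in> polyfun" by (rule polyfun.mult[OF polyfun.const polyfun.coord])
  have 2: "(\<lambda>l. (- x$j) * l$i) \<in> polyfun" by (rule polyfun.mult[OF polyfun.const polyfun.coord])
  have "(\<lambda>l. x$i * l$j + (- x$j) * l$i) \<in> polyfun" by (rule polyfun.add[OF 1 2])
  moreover have "minor x i j = (\<lambda>l. x$i * l$j + (- x$j) * l$i)" by (rule ext) (simp add: minor_def)
  ultimately have "minor x i j \<in> polyfun" by simp
  moreover have "\<forall>t l. minor x i j (t *s l) = t ^ 1 * minor x i j l" by (simp add: minor_def algebra_simps)
  ultimately show ?thesis unfolding homog_poly_def by blast
qed

lemma r1: "\<forall>p\<in>(\<lambda>(i,j). minor x i j) ` UNIV. homog_poly p" using homog_minor by auto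
lemma r2: "(x::complex^4) \<noteq> 0 \<Longrightarrow> \<exists>i. x $ i \<noteq> 0" by (auto simp: vec_eq_iff)
lemma r3: "minor x i j \<in> (\<lambda>(i,j). minor x i j) ` UNIV" by (rule image_eqI[of _ _ "(i,j)"]) simp_all
lemma r4: "(a::complex) \<noteq> 0 \<Longrightarrow> a * b = c * d \<Longrightarrow> b = (d / a) * c"
  by (simp add: field_simps)

lemma closed_Lx: assumes "x \<noteq> 0" shows "proj_closed (Lx x)"
proof -
  let ?P = "(\<lambda>(i,j). minor x i j) ` UNIV"
  have "\<forall>p\<in>?P. homog_poly p" by (rule r1)
  moreover have "Lx x = {y. y \<noteq> 0 \<and> (\<forall>p\<in>?P. p y = 0)}"
  proof (intro equalityI subsetI CollectI conjI ballI)
    fix y p assume yL: "y \<in> Lx x" and pP: "p \<in> ?P"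
    from pP obtain i j where "p = minor x i j" by auto
    moreover from yL obtain c where "y = c *s x" unfolding Lx_def by blast
    ultimately show "p y = 0" by (simp add: minor_def)
  next
    fix y assume "y \<in> Lx x" then show "y \<noteq> 0" unfolding Lx_def by blast
  next
    fix y assume "y \<in> {y. y \<noteq> 0 \<and> (\<forall>p\<in>?P. p y = 0)}"
    then have y0: "y \<noteq> 0" and yP: "\<forall>p\<in>?P. p y = 0" by blast+
    have y: "\<And>i j. minor x i j y = 0" using bspec[OF yP r3] by blast
    obtain i where i: "x $ i \<noteq> 0" using r2[OF assms] by blast
    have "y = (y $ i / x $ i) *s x"
    proof (rule iffD2[OF vec_eq_iff], rule allI)
      fix j
      have "minor x i j y = 0" by (rule y)
      then have "x $ i * y $ j = x $ j * y $ i" by (simp add: minor_def)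
      then have "y $ j = (y $ i / x $ i) * x $ j" by (rule r4[OF i])
      then show "y $ j = ((y $ i / x $ i) *s x) $ j" by simp
    qed
    then show "y \<in> Lx x" unfolding Lx_def using y0 by blast
  qed
  ultimately have "(\<forall>p\<in>?P. homog_poly p) \<and> Lx x = {y. y \<noteq> 0 \<and> (\<forall>p\<in>?P. p y = 0)}"
    by (rule conjI)
  then show ?thesis unfolding proj_closed_def by (rule exI)
qed

lemma polyfun_restrict: "p \<in> polyfun \<Longrightarrow> \<exists>Q. \<forall>s. p (s *s u + v) = poly Q s"
proof (induction rule: polyfun.induct)
  case (const c) show ?case by (rule exI[of _ "[:c:]"]) simp
next
  case (coord i) show ?case by (rule exI[of _ "[:v $ i, u $ i:]"]) (simp add: algebra_simps)
next
  case (add p q)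
  then obtain P Q where "\<forall>s. p (s *s u + v) = poly P s" "\<forall>s. q (s *s u + v) = poly Q s" by blast
  then show ?case by (intro exI[of _ "P + Q"]) simp
next
  case (mult p q)
  then obtain P Q where "\<forall>s. p (s *s u + v) = poly P s" "\<forall>s. q (s *s u + v) = poly Q s" by blast
  then show ?case by (intro exI[of _ "P * Q"]) simp
qed

lemma infinite_nonzero: "infinite {t::complex. t \<noteq> 0}"
proof -
  have "{t::complex. t \<noteq> 0} = UNIV - {0}" by blast
  moreover have "infinite (UNIV - {0::complex})"
    using infinite_UNIV_char_0 by (metis Diff_infinite_finite finite.emptyI finite_insert)
  ultimately show ?thesis by simp
qed

lemma poly_zero_if_nonzero_roots:
  assumes "\<And>t. t \<noteq> 0 \<Longrightarrow> poly (Q::complex poly) t = 0" shows "Q = 0"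
proof (rule ccontr)
  assume "Q \<noteq> 0"
  then have "finite {t. poly Q t = 0}" by (rule poly_roots_finite)
  moreover have "{t::complex. t \<noteq> 0} \<subseteq> {t. poly Q t = 0}" using assms by blast
  ultimately show False using infinite_nonzero finite_subset by blast
qed

lemma smult_split: "(t::complex) \<noteq> 0 \<Longrightarrow> s *s u + t *s v = t *s ((s / t) *s u + v)"
  by (simp add: vec_eq_iff field_simps)

definition Tp :: "complex^4 \<Rightarrow> complex^4 \<Rightarrow> (complex^4) set" where
  "Tp u v = {w. w \<noteq> 0 \<and> (\<exists>s t. w = s *s u + t *s v)}"

lemma homog_deg: "homog_poly p \<Longrightarrow> \<exists>d. \<forall>t x. p (t *s x) = t ^ d * p x"
  unfolding homog_poly_def by blast

lemma vanish_plane: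
  assumes hp: "homog_poly p" and Q: "\<forall>s. p (s *s u + v) = poly Q s" and Q0: "Q = 0"
  shows "p (s *s u + t *s v) = 0"
proof -
  obtain d where d: "\<forall>t x. p (t *s x) = t ^ d * p x" using homog_deg[OF hp] by blast
  have pu: "p u = 0"
  proof -
    have pf: "p \<in> polyfun" using hp unfolding homog_poly_def by blast
    obtain Q2 where Q2: "\<forall>t. p (t *s v + u) = poly Q2 t" using polyfun_restrict[OF pf] by blast
    have "poly Q2 t = 0" if t: "t \<noteq> 0" for t
    proof -
      have e: "t *s v + u = t *s ((1 / t) *s u + v)" using t by (simp add: vec_eq_iff field_simps)
      have "p (t *s v + u) = t ^ d * p ((1 / t) *s u + v)" unfolding e by (rule d[rule_format])
      also have "\<dots> = 0" using Q Q0 by simp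
      finally show ?thesis using Q2 by simp
    qed
    then have "Q2 = 0" by (rule poly_zero_if_nonzero_roots)
    moreover have e0: "0 *s v + u = u" by (simp add: vec_eq_iff)
    moreover have "p (0 *s v + u) = poly Q2 0" using Q2 by blast
    ultimately show ?thesis by simp
  qed
  show ?thesis
  proof (cases "t = 0")
    case True
    have e: "s *s u + t *s v = s *s u" using True by (simp add: vec_eq_iff)
    have "p (s *s u) = s ^ d * p u" by (rule d[rule_format])
    then show ?thesis unfolding e using pu by simp
  next
    case False
    have "p (s *s u + t *s v) = t ^ d * p ((s / t) *s u + v)" unfolding smult_split[OF False] by (rule d[rule_format])
    then show ?thesis using Q Q0 by simp
  qed
qed

lemma fact_K:
  assumes Y: "proj_closed Y" and YT: "Y \<subseteq> Tp u v"
  shows "Y = Tp u v \<or> (\<exists>X. finite X \<and> (\<forall>x\<in>X. x \<noteq> 0) \<and> Y \<subseteq> \<Union>(Lx ` X))"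
proof -
  obtain P where P: "\<forall>p\<in>P. homog_poly p" "Y = {x. x \<noteq> 0 \<and> (\<forall>p\<in>P. p x = 0)}"
    using A1[OF Y] by blast
  show ?thesis
  proof (cases "\<forall>p\<in>P. \<forall>w\<in>Tp u v. p w = 0")
    case True
    have "Tp u v \<subseteq> Y"
    proof
      fix w assume w: "w \<in> Tp u v"
      then have "w \<noteq> 0" unfolding Tp_def by blast
      moreover have "\<forall>p\<in>P. p w = 0" using True w by blast
      ultimately show "w \<in> Y" unfolding P(2) by blast
    qed
    then show ?thesis using YT by blast
  next
    case False
    then obtain p w0 where pP: "p \<in> P" and w0: "w0 \<in> Tp u v" "p w0 \<noteq> 0" by blast
    have hp: "homog_poly p" using P(1) pP by blast
    then have pf: "p \<in> polyfun" unfolding homog_poly_def by blast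
    obtain d where d: "\<forall>t x. p (t *s x) = t ^ d * p x" using homog_deg[OF hp] by blast
    obtain Q where Q: "\<forall>s. p (s *s u + v) = poly Q s" using polyfun_restrict[OF pf] by blast
    have Qn: "Q \<noteq> 0"
    proof
      assume Q0: "Q = 0"
      obtain s t where "w0 = s *s u + t *s v" using w0(1) unfolding Tp_def by blast
      then show False using vanish_plane[OF hp Q Q0, of s t] w0(2) by simp
    qed
    define R where "R = {r. poly Q r = 0}"
    have finR: "finite R" unfolding R_def using Qn by (rule poly_roots_finite)
    define X where "X = ((\<lambda>r. r *s u + v) ` R \<union> {u}) - {0}"
    have "finite X" unfolding X_def using finR by blast
    moreover have "\<forall>x\<in>X. x \<noteq> 0" unfolding X_def by blast
    moreover have "Y \<subseteq> \<Union>(Lx ` X)"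
    proof
      fix w assume wY: "w \<in> Y"
      then have w0': "w \<noteq> 0" and pw: "p w = 0" using pP unfolding P(2) by blast+
      obtain s t where st: "w = s *s u + t *s v" using YT wY unfolding Tp_def by blast
      show "w \<in> \<Union>(Lx ` X)"
      proof (cases "t = 0")
        case True
        then have ws: "w = s *s u" using st by (simp add: vec_eq_iff)
        then have "u \<noteq> 0" using w0' by auto
        then have "u \<in> X" unfolding X_def by blast
        moreover have "w \<in> Lx u" unfolding Lx_def using ws w0' by blast
        ultimately show ?thesis by blast
      next
        case False
        have ws: "w = t *s ((s / t) *s u + v)" unfolding st by (rule smult_split[OF False])
        have "p w = t ^ d * p ((s / t) *s u + v)" unfolding ws by (rule d[rule_format])
        then have "p w = t ^ d * poly Q (s / t)" using Q by simp
        then have "poly Q (s / t) = 0" using pw False by simp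
        then have "s / t \<in> R" unfolding R_def by blast
        moreover have "(s / t) *s u + v \<noteq> 0"
        proof
          assume h: "(s / t) *s u + v = 0"
          have "w = t *s 0" using ws unfolding h .
          then show False using w0' by simp
        qed
        ultimately have "(s / t) *s u + v \<in> X" unfolding X_def by blast
        moreover have "w \<in> Lx ((s / t) *s u + v)" unfolding Lx_def using ws w0' by blast
        ultimately show ?thesis by blast
      qed
    qed
    ultimately show ?thesis by blast
  qed
qed

lemma closed_UN_Lx: "finite X \<Longrightarrow> (\<forall>x\<in>X. x \<noteq> 0) \<Longrightarrow> proj_closed (\<Union>(Lx ` X))"
proof (induction X rule: finite_induct)
  case empty then show ?case using closed_empty by simp
next
  case (insert x X)
  then have "proj_closed (Lx x)" "proj_closed (\<Union>(Lx ` X))" using closed_Lx by blast+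
  then show ?case using closed_Un by (metis Union_image_insert)
qed

lemma scale_eq: "(c::complex) \<noteq> 0 \<Longrightarrow> (c' / c) *s (c *s x) = c' *s x"
  by (simp add: vec_eq_iff)

lemma Lx_sub: assumes Y: "proj_closed Y" and y: "y \<in> Y" "y \<in> Lx x" shows "Lx x \<subseteq> Y"
proof
  fix z assume z: "z \<in> Lx x"
  obtain c where c: "y = c *s x" using y(2) unfolding Lx_def by blast
  obtain c' where c': "z = c' *s x" "z \<noteq> 0" using z unfolding Lx_def by blast
  have c0: "c \<noteq> 0" using c y(2) unfolding Lx_def by auto
  have c'0: "c' \<noteq> 0" using c' by auto
  have "z = (c' / c) *s y" unfolding c c'(1) by (rule scale_eq[OF c0, symmetric])
  moreover have "c' / c \<noteq> 0" using c0 c'0 by simp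
  ultimately show "z \<in> Y" using closed_scale[OF Y y(1)] by simp
qed

lemma irred_in_lines:
  assumes fin: "finite X" and nz: "\<forall>x\<in>X. x \<noteq> 0" and Y: "proj_irred Y"
  shows "Y \<subseteq> \<Union>(Lx ` X) \<Longrightarrow> \<exists>x\<in>X. Y = Lx x"
  using fin nz
proof (induction X rule: finite_induct)
  case empty then show ?case using Y unfolding proj_irred_def by simp
next
  case (insert x X)
  have cY: "proj_closed Y" using Y unfolding proj_irred_def by blast
  have c1: "proj_closed (Y \<inter> Lx x)" using closed_Int[OF cY closed_Lx] insert.prems by simp
  have c2: "proj_closed (Y \<inter> \<Union>(Lx ` X))" using closed_Int[OF cY closed_UN_Lx[OF insert.hyps(1)]] insert.prems by simp
  have "Y = (Y \<inter> Lx x) \<union> (Y \<inter> \<Union>(Lx ` X))" using insert.prems by blast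
  then have "Y = Y \<inter> Lx x \<or> Y = Y \<inter> \<Union>(Lx ` X)"
    using Y c1 c2 unfolding proj_irred_def by blast
  then show ?case
  proof
    assume h: "Y = Y \<inter> Lx x"
    obtain y where y: "y \<in> Y" using Y unfolding proj_irred_def by blast
    then have "y \<in> Lx x" using h by blast
    then have "Lx x \<subseteq> Y" using Lx_sub[OF cY y] by blast
    then have "Y = Lx x" using h by blast
    then show ?thesis by blast
  next
    assume "Y = Y \<inter> \<Union>(Lx ` X)"
    then have "Y \<subseteq> \<Union>(Lx ` X)" by blast
    then show ?thesis using insert.IH insert.prems by blast
  qed
qed

lemma codim_plane: assumes "Z \<subseteq> Tp u v" shows "proj_codim_ge Z 2"
  unfolding proj_codim_ge_def
proof (intro allI impI)
  fix n assume "proj_dim_ge Z n"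
  then obtain C where C: "\<forall>k\<le>n. proj_irred (C k) \<and> C k \<subseteq> Z" "\<forall>k<n. C k \<subset> C (Suc k)"
    unfolding proj_dim_ge_def by blast
  show "n + 2 \<le> 3"
  proof (rule ccontr)
    assume "\<not> n + 2 \<le> 3"
    then have n: "2 \<le> n" by simp
    have i0: "proj_irred (C 0)" using C(1)[rule_format, of 0] by simp
    have i1: "proj_irred (C 1)" using C(1)[rule_format, of 1] n by simp
    have s2: "C 2 \<subseteq> Z" using C(1)[rule_format, of 2] n by simp
    have "C 0 \<subset> C (Suc 0)" using C(2)[rule_format, of 0] n by simp
    then have l01: "C 0 \<subset> C 1" by simp
    have "C 1 \<subset> C (Suc 1)" using C(2)[rule_format, of 1] n by simp
    then have l12: "C 1 \<subset> C 2" by (simp add: numeral_2_eq_2)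
    have cl1: "proj_closed (C 1)" using i1 unfolding proj_irred_def by blast
    have "C 1 \<subseteq> Tp u v" using l12 s2 assms by blast
    from fact_K[OF cl1 this] show False
    proof
      assume "C 1 = Tp u v"
      then show False using l12 s2 assms by blast
    next
      assume "\<exists>X. finite X \<and> (\<forall>x\<in>X. x \<noteq> 0) \<and> C 1 \<subseteq> \<Union>(Lx ` X)"
      then obtain X where X: "finite X" "\<forall>x\<in>X. x \<noteq> 0" "C 1 \<subseteq> \<Union>(Lx ` X)" by blast
      obtain x where x: "C 1 = Lx x" using irred_in_lines[OF X(1) X(2) i1 X(3)] by blast
      obtain y where y: "y \<in> C 0" using i0 unfolding proj_irred_def by blast
      have cl0: "proj_closed (C 0)" using i0 unfolding proj_irred_def by blast
      have "Lx x \<subseteq> C 0" using Lx_sub[OF cl0 y] l01 x y by blast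
      then show False using l01 x by blast
    qed
  qed
qed

lemma span0: "vec.span {} = ({0}::('a::field^'n) set)" by (rule vec.span_empty)
lemma dim0: "vec.dim ({0}::('a::field^'n) set) = 0"
  by (metis span0 vec.dim_span vec.dim_empty)
lemma dimU: "vec.dim (UNIV::('a::field^'n) set) = CARD('n)"
  by (simp add: card_cart_basis)
lemma sub0: "vec.subspace ({0}::('a::field^'n) set)"
  by (metis span0 vec.subspace_span)
lemma subU: "vec.subspace (UNIV::('a::field^'n) set)" by simp
lemma ne1: "({0}::(complex^'n) set) \<noteq> UNIV"
proof
  assume "({0}::(complex^'n) set) = UNIV"
  then have "((\<chi> i. 1)::complex^'n) \<in> {0}" by simp
  then show False by (simp add: vec_eq_iff)
qed

lemma notstable_F0:
  assumes "\<forall>i. F i = 0"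
  shows "\<not> theta_stable F G (\<alpha>, - (\<alpha> + \<gamma>) / 4, \<gamma>)"
proof
  assume st: "theta_stable F G (\<alpha>, - (\<alpha> + \<gamma>) / 4, \<gamma>)"
  have "is_subrep F G UNIV {0} {0}"
    unfolding is_subrep_def using assms sub0 subU by simp
  then have "theta_pair (\<alpha>, - (\<alpha> + \<gamma>) / 4, \<gamma>) (vec.dim (UNIV::(complex^1) set), vec.dim ({0}::(complex^4) set), vec.dim ({0}::(complex^1) set)) < 0"
    using st ne1 unfolding theta_stable_def by blast
  then have a: "\<alpha> < 0" unfolding dim0 dimU theta_pair_def by (simp add: field_simps)
  have "is_subrep F G {0} UNIV UNIV"
    unfolding is_subrep_def using assms sub0 subU by simp
  then have "theta_pair (\<alpha>, - (\<alpha> + \<gamma>) / 4, \<gamma>) (vec.dim ({0}::(complex^1) set), vec.dim (UNIV::(complex^4) set), vec.dim (UNIV::(complex^1) set)) < 0"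
    using st ne1 unfolding theta_stable_def by blast
  then have "- \<alpha> < 0" unfolding dim0 dimU theta_pair_def by (simp add: field_simps)
  then show False using a by simp
qed

lemma notstable_G0:
  assumes "\<forall>i. G i = 0"
  shows "\<not> theta_stable F G (\<alpha>, - (\<alpha> + \<gamma>) / 4, \<gamma>)"
proof
  assume st: "theta_stable F G (\<alpha>, - (\<alpha> + \<gamma>) / 4, \<gamma>)"
  have "is_subrep F G {0} {0} UNIV"
    unfolding is_subrep_def using assms sub0 subU by simp
  then have "theta_pair (\<alpha>, - (\<alpha> + \<gamma>) / 4, \<gamma>) (vec.dim ({0}::(complex^1) set), vec.dim ({0}::(complex^4) set), vec.dim (UNIV::(complex^1) set)) < 0"
    using st ne1 unfolding theta_stable_def by blast
  then have a: "\<gamma> < 0" unfolding dim0 dimU theta_pair_def by (simp add: field_simps)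
  have "is_subrep F G UNIV UNIV {0}"
    unfolding is_subrep_def using assms sub0 subU by simp
  then have "theta_pair (\<alpha>, - (\<alpha> + \<gamma>) / 4, \<gamma>) (vec.dim (UNIV::(complex^1) set), vec.dim (UNIV::(complex^4) set), vec.dim ({0}::(complex^1) set)) < 0"
    using st ne1 unfolding theta_stable_def by blast
  then have "- \<gamma> < 0" unfolding dim0 dimU theta_pair_def by (simp add: field_simps)
  then show False using a by simp
qed

lemma four_split:
  fixes i j :: 4 assumes "i \<noteq> j"
  obtains p q where "p \<noteq> q" "p \<noteq> i" "p \<noteq> j" "q \<noteq> i" "q \<noteq> j" "UNIV = {i, j, p, q}"
proof -
  have "card (UNIV - {i, j}) = 2" using assms by (simp add: card_Diff_subset)
  then obtain p q where pq: "UNIV - {i, j} = {p, q}" "p \<noteq> q" by (meson card_2_iff)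
  then have "p \<noteq> i" "p \<noteq> j" "q \<noteq> i" "q \<noteq> j" by blast+
  moreover have "UNIV = {i, j, p, q}" using pq by blast
  ultimately show ?thesis using that pq(2) by blast
qed

lemma sum4:
  fixes f :: "4 \<Rightarrow> complex"
  assumes "p \<noteq> q" "p \<noteq> i" "p \<noteq> j" "q \<noteq> i" "q \<noteq> j" "i \<noteq> j" "UNIV = {i, j, p, q}"
  shows "sum f UNIV = f i + f j + f p + f q"
proof -
  have "sum f UNIV = sum f {i, j, p, q}" by (subst assms(7)) (rule refl)
  also have "\<dots> = f i + f j + f p + f q" using assms(1-6) by (simp add: add.assoc)
  finally show ?thesis .
qed

lemma plane_lin:
  fixes N :: "4 \<Rightarrow> 4 \<Rightarrow> complex"
  assumes ij: "N i j \<noteq> 0" and ji: "N j i \<noteq> 0" and ii: "N i i = 0" and jj: "N j j = 0"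
  shows "\<exists>u v. \<forall>l. (\<Sum>k\<in>UNIV. N i k * l $ k) = 0 \<and> (\<Sum>k\<in>UNIV. N j k * l $ k) = 0
           \<longrightarrow> (\<exists>s t. l = s *s u + t *s v)"
proof -
  have neq: "i \<noteq> j" using ij ii by auto
  obtain p q where pq: "p \<noteq> q" "p \<noteq> i" "p \<noteq> j" "q \<noteq> i" "q \<noteq> j" "UNIV = {i, j, p, q}"
    using four_split[OF neq] by blast
  define w where "w r = (\<chi> m. (if m = r then 1 else 0) - (if m = j then N i r / N i j else 0)
                                 - (if m = i then N j r / N j i else 0))" for r
  show ?thesis
  proof (rule exI[of _ "w p"], rule exI[of _ "w q"], intro allI impI)
    fix l :: "complex^4"
    assume h: "(\<Sum>k\<in>UNIV. N i k * l $ k) = 0 \<and> (\<Sum>k\<in>UNIV. N j k * l $ k) = 0"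
    have e1: "N i j * l $ j + N i p * l $ p + N i q * l $ q = 0"
      using h sum4[OF pq(1-5) neq pq(6), of "\<lambda>k. N i k * l $ k"] ii by simp
    have e2: "N j i * l $ i + N j p * l $ p + N j q * l $ q = 0"
      using h sum4[OF pq(1-5) neq pq(6), of "\<lambda>k. N j k * l $ k"] jj by simp
    have e1': "N i j * l $ j = - N i p * l $ p - N i q * l $ q" using e1 by algebra
    have e2': "N j i * l $ i = - N j p * l $ p - N j q * l $ q" using e2 by algebra
    have lj: "l $ j = - (N i p / N i j) * l $ p - (N i q / N i j) * l $ q"
      using e1' ij by (simp add: field_simps)
    have li: "l $ i = - (N j p / N j i) * l $ p - (N j q / N j i) * l $ q"
      using e2' ji by (simp add: field_simps)
    have "l = l $ p *s w p + l $ q *s w q"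
    proof (rule iffD2[OF vec_eq_iff], rule allI)
      fix m :: 4
      have "m \<in> {i, j, p, q}" using pq(6) by blast
      then show "l $ m = (l $ p *s w p + l $ q *s w q) $ m"
      proof (elim insertE emptyE)
        assume "m = i" then show ?thesis using li neq pq unfolding w_def by (simp add: algebra_simps)
      next
        assume "m = j" then show ?thesis using lj neq pq unfolding w_def by (simp add: algebra_simps)
      next
        assume "m = p" then show ?thesis using neq pq unfolding w_def by simp
      next
        assume "m = q" then show ?thesis using neq pq unfolding w_def by simp
      qed
    qed
    then show "\<exists>s t. l = s *s w p + t *s w q" by blast
  qed
qed

definition av :: "(4 \<Rightarrow> complex^1^4) \<Rightarrow> complex^4 \<Rightarrow> complex^4" where
  "av F l = (\<chi> m. \<Sum>i\<in>UNIV. l $ i * F i $ m $ 1)"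
definition bv :: "(4 \<Rightarrow> complex^4^1) \<Rightarrow> complex^4 \<Rightarrow> complex^4" where
  "bv G l = (\<chi> m. \<Sum>i\<in>UNIV. l $ i * G i $ 1 $ m)"
definition Mm :: "(4 \<Rightarrow> complex^1^4) \<Rightarrow> (4 \<Rightarrow> complex^4^1) \<Rightarrow> 4 \<Rightarrow> 4 \<Rightarrow> complex" where
  "Mm F G i j = (\<Sum>m\<in>UNIV. G i $ 1 $ m * F j $ m $ 1)"

lemma rep_M: assumes "is_rep F G" shows "Mm F G i j + Mm F G j i = 0"
proof -
  have "(G i ** F j + G j ** F i) $ 1 $ 1 = 0" using assms unfolding is_rep_def by simp
  then show ?thesis unfolding Mm_def by (simp add: matrix_matrix_mult_def)
qed

lemma c1: "(F i *v (x::complex^1)) $ m = F i $ m $ 1 * x $ 1"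
  by (simp add: matrix_vector_mult_def)
lemma c2: "sum_f F l x $ m = (\<Sum>i\<in>UNIV. l $ i * (F i $ m $ 1 * x $ 1))"
  unfolding sum_f_def by (simp add: sum_component c1)
lemma c3: "(\<Sum>i\<in>UNIV. (l::complex^4) $ i * (F i $ m $ 1 * x $ 1)) = x $ 1 * (\<Sum>i\<in>UNIV. l $ i * F i $ m $ 1)"
  by (simp add: sum_distrib_left ac_simps)

lemma sum_f_eq: "sum_f F l x = x $ 1 *s av F l"
proof (rule iffD2[OF vec_eq_iff], rule allI)
  fix m show "sum_f F l x $ m = (x $ 1 *s av F l) $ m"
    unfolding c2 c3 av_def by simp
qed

lemma d1: "(G i *v (v::complex^4)) $ 1 = (\<Sum>m\<in>UNIV. G i $ 1 $ m * v $ m)"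
  by (simp add: matrix_vector_mult_def)
lemma d2: "sum_g G l v $ 1 = (\<Sum>i\<in>UNIV. l $ i * (\<Sum>m\<in>UNIV. G i $ 1 $ m * v $ m))"
  unfolding sum_g_def sum_component vector_smult_component d1 ..
lemma d3: "(\<Sum>i\<in>UNIV. (l::complex^4) $ i * (\<Sum>m\<in>UNIV. G i $ 1 $ m * v $ m)) = (\<Sum>m\<in>UNIV. (\<Sum>i\<in>UNIV. l $ i * G i $ 1 $ m) * v $ m)"
proof -
  have "(\<Sum>i\<in>UNIV. (l::complex^4) $ i * (\<Sum>m\<in>UNIV. G i $ 1 $ m * v $ m)) = (\<Sum>i\<in>UNIV. \<Sum>m\<in>UNIV. l $ i * G i $ 1 $ m * v $ m)"
    by (simp add: sum_distrib_left mult.assoc)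
  also have "\<dots> = (\<Sum>m\<in>UNIV. \<Sum>i\<in>UNIV. l $ i * G i $ 1 $ m * v $ m)" by (rule sum.swap)
  also have "\<dots> = (\<Sum>m\<in>UNIV. (\<Sum>i\<in>UNIV. l $ i * G i $ 1 $ m) * v $ m)" by (simp add: sum_distrib_right)
  finally show ?thesis .
qed

lemma sum_g_eq: "sum_g G l v = (\<chi> _. \<Sum>m\<in>UNIV. bv G l $ m * v $ m)"
proof (rule iffD2[OF vec_eq_iff], rule allI)
  fix k :: 1
  have k: "k = 1" by simp
  show "sum_g G l v $ k = (\<chi> _. \<Sum>m\<in>UNIV. bv G l $ m * v $ m) $ k"
    unfolding k d2 d3 bv_def by simp
qed

lemma inj_sum_f: "inj (sum_f F l) \<longleftrightarrow> av F l \<noteq> 0"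
proof
  assume i: "inj (sum_f F l)"
  show "av F l \<noteq> 0"
  proof
    assume a: "av F l = 0"
    have "sum_f F l 0 = sum_f F l (\<chi> _. 1)" unfolding sum_f_eq a by simp
    then have "(0::complex^1) = (\<chi> _. 1)" using i unfolding inj_def by blast
    then show False by (simp add: vec_eq_iff)
  qed
next
  assume a: "av F l \<noteq> 0"
  then obtain m where m: "av F l $ m \<noteq> 0" by (auto simp: vec_eq_iff)
  show "inj (sum_f F l)"
  proof (rule injI)
    fix x y assume "sum_f F l x = sum_f F l y"
    then have "x $ 1 *s av F l = y $ 1 *s av F l" unfolding sum_f_eq .
    then have "x $ 1 * av F l $ m = y $ 1 * av F l $ m" by (metis vector_smult_component)
    then have "x $ 1 = y $ 1" using m by simp
    then show "x = y" by (simp add: vec_eq_iff)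
  qed
qed

lemma surj_sum_g: "surj (sum_g G l) \<longleftrightarrow> bv G l \<noteq> 0"
proof
  assume s: "surj (sum_g G l)"
  show "bv G l \<noteq> 0"
  proof
    assume b: "bv G l = 0"
    obtain v where "(\<chi> _. 1) = sum_g G l v" using s by blast
    then have "(\<chi> _. 1) = (0::complex^1)" unfolding sum_g_eq b by (simp add: vec_eq_iff)
    then show False by (simp add: vec_eq_iff)
  qed
next
  assume b: "bv G l \<noteq> 0"
  then obtain m where m: "bv G l $ m \<noteq> 0" by (auto simp: vec_eq_iff)
  show "surj (sum_g G l)"
  proof (rule surjI)
    fix y :: "complex^1"
    show "sum_g G l ((y $ 1 / bv G l $ m) *s axis m 1) = y"
      unfolding sum_g_eq using m
      by (simp add: vec_eq_iff axis_def if_distrib[of "\<lambda>z. _ * z"] cong: if_cong)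
  qed
qed

lemma ker_transpose:
  fixes Mx :: "complex^4^4"
  assumes "\<forall>l. Mx *v l = 0 \<longrightarrow> l = 0" "transpose Mx *v a = 0"
  shows "a = 0"
proof -
  obtain B where "B ** Mx = mat 1" using matrix_left_invertible_ker assms(1) by blast
  then have "Mx ** B = mat 1" using matrix_left_right_inverse by blast
  then have "transpose B ** transpose Mx = mat 1" by (metis matrix_transpose_mul transpose_mat)
  then have "\<forall>x. transpose Mx *v x = 0 \<longrightarrow> x = 0" using matrix_left_invertible_ker by blast
  then show ?thesis using assms(2) by blast
qed

lemma M_av: "(\<Sum>k\<in>UNIV. Mm F G x k * l $ k) = (\<Sum>m\<in>UNIV. G x $ 1 $ m * av F l $ m)"
proof -
  have "(\<Sum>k\<in>UNIV. Mm F G x k * l $ k) = (\<Sum>k\<in>UNIV. \<Sum>m\<in>UNIV. G x $ 1 $ m * F k $ m $ 1 * l $ k)"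
    unfolding Mm_def by (simp add: sum_distrib_right)
  also have "\<dots> = (\<Sum>m\<in>UNIV. \<Sum>k\<in>UNIV. G x $ 1 $ m * F k $ m $ 1 * l $ k)" by (rule sum.swap)
  also have "\<dots> = (\<Sum>m\<in>UNIV. G x $ 1 $ m * av F l $ m)"
    unfolding av_def by (simp add: sum_distrib_left ac_simps)
  finally show ?thesis .
qed

lemma M_bv: "(\<Sum>k\<in>UNIV. Mm F G k x * l $ k) = (\<Sum>m\<in>UNIV. F x $ m $ 1 * bv G l $ m)"
proof -
  have "(\<Sum>k\<in>UNIV. Mm F G k x * l $ k) = (\<Sum>k\<in>UNIV. \<Sum>m\<in>UNIV. G k $ 1 $ m * F x $ m $ 1 * l $ k)"
    unfolding Mm_def by (simp add: sum_distrib_right)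
  also have "\<dots> = (\<Sum>m\<in>UNIV. \<Sum>k\<in>UNIV. G k $ 1 $ m * F x $ m $ 1 * l $ k)" by (rule sum.swap)
  also have "\<dots> = (\<Sum>m\<in>UNIV. F x $ m $ 1 * bv G l $ m)"
    unfolding bv_def by (simp add: sum_distrib_left ac_simps)
  finally show ?thesis .
qed

lemma homog_lin': "homog_poly (\<lambda>l. \<Sum>k\<in>UNIV. c k * l $ k)" by (rule homog_lin)

lemma closed_lin_zero:
  fixes c :: "4 \<Rightarrow> 4 \<Rightarrow> complex"
  shows "proj_closed {l. l \<noteq> 0 \<and> (\<forall>m. (\<Sum>k\<in>UNIV. c m k * l $ k) = 0)}"
proof -
  let ?P = "range (\<lambda>m. (\<lambda>l. \<Sum>k\<in>UNIV. c m k * l $ k))"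
  have "\<forall>p\<in>?P. homog_poly p" by (simp add: homog_lin)
  moreover have "{l. l \<noteq> 0 \<and> (\<forall>m. (\<Sum>k\<in>UNIV. c m k * l $ k) = 0)} = {l. l \<noteq> 0 \<and> (\<forall>p\<in>?P. p l = 0)}"
    by simp
  ultimately have "(\<forall>p\<in>?P. homog_poly p) \<and> {l. l \<noteq> 0 \<and> (\<forall>m. (\<Sum>k\<in>UNIV. c m k * l $ k) = 0)} = {l. l \<noteq> 0 \<and> (\<forall>p\<in>?P. p l = 0)}"
    by (rule conjI)
  then show ?thesis unfolding proj_closed_def by (rule exI)
qed

lemma av_zero_iff: "av F l = 0 \<longleftrightarrow> (\<forall>m. (\<Sum>k\<in>UNIV. F k $ m $ 1 * l $ k) = 0)"
  unfolding av_def by (simp add: vec_eq_iff mult.commute)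

lemma bv_zero_iff: "bv G l = 0 \<longleftrightarrow> (\<forall>m. (\<Sum>k\<in>UNIV. G k $ 1 $ m * l $ k) = 0)"
  unfolding bv_def by (simp add: vec_eq_iff mult.commute)

lemma F_zero: fixes F :: "4 \<Rightarrow> complex^1^4" assumes "\<forall>j m. F j $ m $ 1 = 0" shows "F i = 0"
  using assms by (simp add: vec_eq_iff)

lemma G_zero: fixes G :: "4 \<Rightarrow> complex^4^1" assumes "\<forall>j m. G j $ 1 $ m = 0" shows "G i = 0"
  using assms by (simp add: vec_eq_iff)

lemma case1:
  assumes rep: "is_rep F G" and gs: "glob_surj G" and nli: "\<not> loc_inj F"
  shows "\<forall>i. F i = 0"
proof (rule ccontr)
  assume "\<not> (\<forall>i. F i = 0)"
  then obtain j m0 where jm: "F j $ m0 $ 1 \<noteq> 0" using F_zero by blast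
  define Bt :: "complex^4^4" where "Bt = (\<chi> m k. G k $ 1 $ m)"
  have Bt_mult: "Bt *v l = bv G l" for l
    unfolding Bt_def bv_def by (simp add: vec_eq_iff matrix_vector_mult_def mult.commute)
  have kerB: "\<forall>l. Bt *v l = 0 \<longrightarrow> l = 0"
  proof (intro allI impI)
    fix l assume "Bt *v l = 0"
    then have "bv G l = 0" using Bt_mult by simp
    then have "\<not> surj (sum_g G l)" using surj_sum_g by blast
    then show "l = 0" using gs unfolding glob_surj_def by blast
  qed
  define a :: "complex^4" where "a = (\<chi> m. F j $ m $ 1)"
  have "a \<noteq> 0" unfolding a_def using jm by (auto simp: vec_eq_iff)
  then have "transpose Bt *v a \<noteq> 0" using ker_transpose[OF kerB] by blast
  then obtain i where "(transpose Bt *v a) $ i \<noteq> 0" by (auto simp: vec_eq_iff)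
  moreover have "(transpose Bt *v a) $ i = Mm F G i j"
    unfolding Bt_def a_def Mm_def transpose_def by (simp add: matrix_vector_mult_def)
  ultimately have Mij: "Mm F G i j \<noteq> 0" by simp
  have Mji: "Mm F G j i \<noteq> 0" using rep_M[OF rep, of i j] Mij by (metis add.right_neutral add_eq_0_iff)
  have Mii: "Mm F G i i = 0" using rep_M[OF rep, of i i] by simp
  have Mjj: "Mm F G j j = 0" using rep_M[OF rep, of j j] by simp
  obtain u v where uv: "\<forall>l. (\<Sum>k\<in>UNIV. Mm F G i k * l $ k) = 0 \<and> (\<Sum>k\<in>UNIV. Mm F G j k * l $ k) = 0
           \<longrightarrow> (\<exists>s t. l = s *s u + t *s v)"
    using plane_lin[of "Mm F G" i j, OF Mij Mji Mii Mjj] by blast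
  define Z where "Z = {l. l \<noteq> 0 \<and> (\<forall>m. (\<Sum>k\<in>UNIV. F k $ m $ 1 * l $ k) = 0)}"
  have cZ: "proj_closed Z" unfolding Z_def by (rule closed_lin_zero)
  have "Z \<subseteq> Tp u v"
  proof
    fix l assume "l \<in> Z"
    then have l0: "l \<noteq> 0" and al: "av F l = 0" unfolding Z_def using av_zero_iff by blast+
    have "(\<Sum>k\<in>UNIV. Mm F G x k * l $ k) = 0" for x unfolding M_av al by simp
    then obtain s t where "l = s *s u + t *s v" using uv by blast
    then show "l \<in> Tp u v" unfolding Tp_def using l0 by blast
  qed
  then have "proj_codim_ge Z 2" by (rule codim_plane)
  moreover have "\<forall>l. l \<noteq> 0 \<and> l \<notin> Z \<longrightarrow> inj (sum_f F l)"
  proof (intro allI impI)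
    fix l assume "l \<noteq> 0 \<and> l \<notin> Z"
    then have "av F l \<noteq> 0" unfolding Z_def using av_zero_iff by blast
    then show "inj (sum_f F l)" using inj_sum_f by blast
  qed
  ultimately have "loc_inj F" unfolding loc_inj_def using cZ by blast
  then show False using nli by blast
qed

lemma case2:
  assumes rep: "is_rep F G" and gi: "glob_inj F" and nls: "\<not> loc_surj G"
  shows "\<forall>i. G i = 0"
proof (rule ccontr)
  assume "\<not> (\<forall>i. G i = 0)"
  then obtain i m0 where im: "G i $ 1 $ m0 \<noteq> 0" using G_zero by blast
  define Am :: "complex^4^4" where "Am = (\<chi> m k. F k $ m $ 1)"
  have Am_mult: "Am *v l = av F l" for l
    unfolding Am_def av_def by (simp add: vec_eq_iff matrix_vector_mult_def mult.commute)
  have kerA: "\<forall>l. Am *v l = 0 \<longrightarrow> l = 0"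
  proof (intro allI impI)
    fix l assume "Am *v l = 0"
    then have "av F l = 0" using Am_mult by simp
    then have "\<not> inj (sum_f F l)" using inj_sum_f by blast
    then show "l = 0" using gi unfolding glob_inj_def by blast
  qed
  define b :: "complex^4" where "b = (\<chi> m. G i $ 1 $ m)"
  have "b \<noteq> 0" unfolding b_def using im by (auto simp: vec_eq_iff)
  then have "transpose Am *v b \<noteq> 0" using ker_transpose[OF kerA] by blast
  then obtain j where "(transpose Am *v b) $ j \<noteq> 0" by (auto simp: vec_eq_iff)
  moreover have "(transpose Am *v b) $ j = Mm F G i j"
    unfolding Am_def b_def Mm_def transpose_def by (simp add: matrix_vector_mult_def mult.commute)
  ultimately have Mij: "Mm F G i j \<noteq> 0" by simp
  have Mji: "Mm F G j i \<noteq> 0" using rep_M[OF rep, of i j] Mij by (metis add.right_neutral add_eq_0_iff)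
  have Mii: "Mm F G i i = 0" using rep_M[OF rep, of i i] by simp
  have Mjj: "Mm F G j j = 0" using rep_M[OF rep, of j j] by simp
  define N where "N x y = Mm F G y x" for x y
  obtain u v where uv: "\<forall>l. (\<Sum>k\<in>UNIV. N i k * l $ k) = 0 \<and> (\<Sum>k\<in>UNIV. N j k * l $ k) = 0
           \<longrightarrow> (\<exists>s t. l = s *s u + t *s v)"
    using plane_lin[of N i j] Mij Mji Mii Mjj unfolding N_def by blast
  define Z where "Z = {l. l \<noteq> 0 \<and> (\<forall>m. (\<Sum>k\<in>UNIV. G k $ 1 $ m * l $ k) = 0)}"
  have cZ: "proj_closed Z" unfolding Z_def by (rule closed_lin_zero)
  have "Z \<subseteq> Tp u v"
  proof
    fix l assume "l \<in> Z"
    then have l0: "l \<noteq> 0" and bl: "bv G l = 0" unfolding Z_def using bv_zero_iff by blast+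
    have "(\<Sum>k\<in>UNIV. N x k * l $ k) = 0" for x unfolding N_def M_bv bl by simp
    then obtain s t where "l = s *s u + t *s v" using uv by blast
    then show "l \<in> Tp u v" unfolding Tp_def using l0 by blast
  qed
  then have "proj_codim_ge Z 2" by (rule codim_plane)
  moreover have "\<forall>l. l \<noteq> 0 \<and> l \<notin> Z \<longrightarrow> surj (sum_g G l)"
  proof (intro allI impI)
    fix l assume "l \<noteq> 0 \<and> l \<notin> Z"
    then have "bv G l \<noteq> 0" unfolding Z_def using bv_zero_iff by blast
    then show "surj (sum_g G l)" using surj_sum_g by blast
  qed
  ultimately have "loc_surj G" unfolding loc_surj_def using cZ by blast
  then show False using nls by blast
qed

theorem mainTheorem11:
  fixes F :: "4 \<Rightarrow> complex^1^4" and G :: "4 \<Rightarrow> complex^4^1" and \<alpha> \<gamma> :: real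
  assumes "is_rep F G"
    and "(glob_surj G \<and> \<not> loc_inj F) \<or> (glob_inj F \<and> \<not> loc_surj G)"
  shows "\<not> theta_stable F G (\<alpha>, - (\<alpha> + \<gamma>) / 4, \<gamma>)"
  using assms(2)
proof
  assume "glob_surj G \<and> \<not> loc_inj F"
  then have "\<forall>i. F i = 0" using case1[OF assms(1)] by blast
  then show ?thesis by (rule notstable_F0)
next
  assume "glob_inj F \<and> \<not> loc_surj G"
  then have "\<forall>i. G i = 0" using case2[OF assms(1)] by blast
  then show ?thesis by (rule notstable_G0)
qed

end
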